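(* Let $N\ge 4$ and $\ell>0$. For every equilateral polygon $\mathcal{P}_N=\{y_1,\dots,y_N\}\subset\mathbb{R}^2$ with edge length $\ell$, the sum of lengths of its $2$-diagonals satisfies $\mathcal{D}_2(\mathcal{P}_N)=\sum_{i=1}^N|y_i-y_{i+2}|\le \mathcal{D}_2(\tilde{\mathcal{P}}_N)=2N\ell\cos\frac{\pi}{N}$, with equality only if $\mathcal{P}_N$ is a regular polygon; that is, property $(P_2)$ holds globally in dimension $d=2$.
   Context: A polygon is identified with the ordered set of its vertices $\{y_1,\dots,y_N\}$, indices taken mod $N$; it is equilateral with edge length $\ell$ if $|y_{i+1}-y_i|=\ell$ for all $i$. The regular polygon $\tilde{\mathcal{P}}_N$ of edge length $\ell$ is the planar convex regular $N$-gon with consecutive vertices adjacent, lying on a circle of radius $\ell\,(2\sin\frac{\pi}{N})^{-1}$, determined up to Euclidean transformations. Property $(P_2)$: the sum $\mathcal{D}_2$ of lengths of all $2$-diagonals $[y_i,y_{i+2}]$ is, among equilateral polygons with fixed edge length $\ell$, uniquely maximized (up to Euclidean transformations) by the regular polygon. *)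

theory Defs
  imports "HOL-Analysis.Analysis"
begin

text \<open>A polygon with N vertices in the plane is a map y :: nat => real^2, whose
vertices are y 0, ..., y (N-1); indices are taken mod N.\<close>

definition equilateral_polygon :: "nat \<Rightarrow> real \<Rightarrow> (nat \<Rightarrow> real^2) \<Rightarrow> bool" where
  "equilateral_polygon N l y \<longleftrightarrow> (\<forall>i<N. dist (y i) (y (Suc i mod N)) = l)"

definition diag2_sum :: "nat \<Rightarrow> (nat \<Rightarrow> real^2) \<Rightarrow> real" where
  "diag2_sum N y = (\<Sum>i<N. dist (y i) (y ((i + 2) mod N)))"

text \<open>Regular convex N-gon of edge length l, consecutive vertices adjacent, up to
Euclidean transformations (translation c, rotation angle t, orientation s).\<close>

definition regular_polygon :: "nat \<Rightarrow> real \<Rightarrow> (nat \<Rightarrow> real^2) \<Rightarrow> bool" where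
  "regular_polygon N l y \<longleftrightarrow>
     (\<exists>(c::real^2) (t::real) (s::real). s \<in> {1, -1} \<and>
        (\<forall>i<N. y i = c + (l / (2 * sin (pi / real N))) *\<^sub>R
            vector [cos (t + s * 2 * pi * real i / real N), sin (t + s * 2 * pi * real i / real N)]))"

end

theory Submission
  imports Defs
begin


lemma norm2: "norm (x::real^2) = sqrt ((x$1)^2 + (x$2)^2)"
  by (simp add: norm_vec_def L2_set_def sum_2)

lemma tangent_cos:
  fixes u c :: real
  assumes "0 \<le> u" "u \<le> pi/2" "0 \<le> c" "c \<le> pi/2"
  shows "cos u \<le> cos c - sin c * (u - c)" and "u \<noteq> c \<Longrightarrow> cos u < cos c - sin c * (u - c)"
proof -
  have strict: "cos u < cos c - sin c * (u - c)" if "u \<noteq> c"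
  proof (cases "u < c")
    case True
    from MVT2[OF True DERIV_cos] obtain z where z: "u < z" "z < c" "cos c - cos u = (c - u) * - sin z" by auto
    have "sin z < sin c" using z assms by (intro sin_monotone_2pi) auto
    have "(c - u) * sin z < (c - u) * sin c" using True \<open>sin z < sin c\<close> by (intro mult_strict_left_mono) auto
    with z show ?thesis by (simp add: algebra_simps)
  next
    case False
    hence F: "c < u" using that by auto
    from MVT2[OF F DERIV_cos] obtain z where z: "c < z" "z < u" "cos u - cos c = (u - c) * - sin z" by auto
    have "sin c < sin z" using z assms by (intro sin_monotone_2pi) auto
    have "(u - c) * sin c < (u - c) * sin z" using F \<open>sin c < sin z\<close> by (intro mult_strict_left_mono) auto
    with z show ?thesis by (simp add: algebra_simps)
  qed
  show "cos u \<le> cos c - sin c * (u - c)" proof (cases "u = c")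
    case True then show ?thesis by simp
  next
    case False then show ?thesis using strict by simp
  qed
  show "u \<noteq> c \<Longrightarrow> cos u < cos c - sin c * (u - c)" by (rule strict)
qed



lemma tele_abs:
  fixes \<psi> :: "nat \<Rightarrow> real"
  assumes "a \<le> b"
  shows "\<bar>\<psi> b - \<psi> a\<bar> \<le> (\<Sum>i=a..<b. \<bar>\<psi> (Suc i) - \<psi> i\<bar>)"
proof -
  have "\<psi> b - \<psi> a = (\<Sum>i=a..<b. \<psi> (Suc i) - \<psi> i)" using sum_Suc_diff'[OF assms, of \<psi>] by simp
  also have "\<bar>\<dots>\<bar> \<le> (\<Sum>i=a..<b. \<bar>\<psi> (Suc i) - \<psi> i\<bar>)" by (rule sum_abs)
  finally show ?thesis .
qed

lemma halfplane:
  fixes \<psi> :: "nat \<Rightarrow> real"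
  assumes "(\<Sum>i<N. cos (\<psi> i)) = 0" "(\<Sum>i<N. sin (\<psi> i)) = 0"
  shows "(\<Sum>i<N. cos (\<psi> i - c)) = 0"
proof -
  have "(\<Sum>i<N. cos (\<psi> i - c)) = cos c * (\<Sum>i<N. cos (\<psi> i)) + sin c * (\<Sum>i<N. sin (\<psi> i))"
    by (simp add: cos_diff sum_distrib_left sum.distrib algebra_simps)
  with assms show ?thesis by simp
qed

lemma span_ge_pi:
  fixes \<psi> :: "nat \<Rightarrow> real"
  assumes "N > 0" "(\<Sum>i<N. cos (\<psi> i)) = 0" "(\<Sum>i<N. sin (\<psi> i)) = 0"
  shows "pi \<le> Max (\<psi> ` {..<N}) - Min (\<psi> ` {..<N})"
proof (rule ccontr)
  let ?M = "Max (\<psi> ` {..<N})" and ?m = "Min (\<psi> ` {..<N})"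
  assume "\<not> ?thesis"
  hence lt: "?M - ?m < pi" by simp
  define c where "c = (?M + ?m) / 2"
  have "0 < (\<Sum>i<N. cos (\<psi> i - c))"
  proof (rule sum_pos)
    show "{..<N} \<noteq> {}" using assms by auto
    fix i assume "i \<in> {..<N}"
    hence "\<psi> i \<le> ?M" "?m \<le> \<psi> i" by auto
    hence "-(pi/2) < \<psi> i - c" using lt unfolding c_def by (simp add: field_simps)
    moreover have "\<psi> i - c < pi/2" using \<open>\<psi> i \<le> ?M\<close> \<open>?m \<le> \<psi> i\<close> lt unfolding c_def by (simp add: field_simps)
    ultimately show "0 < cos (\<psi> i - c)" by (intro cos_gt_zero_pi)
  qed auto
  with halfplane[OF assms(2,3)] show False by simp
qed

lemma span_turn:
  fixes \<psi> :: "nat \<Rightarrow> real"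
  assumes "N > 0" "\<psi> N = \<psi> 0"
  shows "2 * (Max (\<psi> ` {..<N}) - Min (\<psi> ` {..<N})) \<le> (\<Sum>i<N. \<bar>\<psi> (Suc i) - \<psi> i\<bar>)"
proof -
  let ?M = "Max (\<psi> ` {..<N})" and ?m = "Min (\<psi> ` {..<N})"
  have ne: "\<psi> ` {..<N} \<noteq> {}" using assms by auto
  obtain p where p: "p < N" "\<psi> p = ?M" using Max_in[OF _ ne] by auto
  obtain q where q: "q < N" "\<psi> q = ?m" using Min_in[OF _ ne] by auto
  define a where "a = min p q"
  define b where "b = max p q"
  have ab: "a \<le> b" "b \<le> N" using p q unfolding a_def b_def by auto
  have span: "?M - ?m = \<bar>\<psi> b - \<psi> a\<bar>"
  proof -
    have "?m \<le> ?M" using p q by (metis Max_ge Min_le finite_imageI finite_lessThan image_eqI lessThan_iff order_trans)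
    thus ?thesis unfolding a_def b_def using p q by (cases "p \<le> q") (auto simp: min_def max_def)
  qed
  let ?f = "\<lambda>i. \<bar>\<psi> (Suc i) - \<psi> i\<bar>"
  have "(\<Sum>i<N. ?f i) = sum ?f {0..<a} + sum ?f {a..<b} + sum ?f {b..<N}"
    using ab by (simp add: sum.atLeastLessThan_concat atLeast0LessThan[symmetric])
  moreover have "\<bar>\<psi> a - \<psi> 0\<bar> \<le> sum ?f {0..<a}" by (rule tele_abs) simp
  moreover have "\<bar>\<psi> b - \<psi> a\<bar> \<le> sum ?f {a..<b}" by (rule tele_abs) (rule ab)
  moreover have "\<bar>\<psi> N - \<psi> b\<bar> \<le> sum ?f {b..<N}" by (rule tele_abs) (rule ab)
  moreover have "\<bar>\<psi> b - \<psi> a\<bar> \<le> \<bar>\<psi> a - \<psi> 0\<bar> + \<bar>\<psi> N - \<psi> b\<bar>" using assms(2) by arith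
  ultimately show ?thesis using span by (smt (verit))
qed

lemma total_turn:
  fixes \<psi> :: "nat \<Rightarrow> real" and k :: int
  assumes "N > 0" "(\<Sum>i<N. cos (\<psi> i)) = 0" "(\<Sum>i<N. sin (\<psi> i)) = 0"
    "\<psi> N = \<psi> 0 + 2 * pi * of_int k"
  shows "2 * pi \<le> (\<Sum>i<N. \<bar>\<psi> (Suc i) - \<psi> i\<bar>)"
proof (cases "k = 0")
  case True
  thus ?thesis using span_turn[of N \<psi>] span_ge_pi[OF assms(1-3)] assms(1,4) by simp
next
  case False
  have "\<bar>\<psi> N - \<psi> 0\<bar> \<le> (\<Sum>i=0..<N. \<bar>\<psi> (Suc i) - \<psi> i\<bar>)" by (rule tele_abs) simp
  moreover have "2 * pi \<le> \<bar>\<psi> N - \<psi> 0\<bar>"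
  proof -
    have "1 \<le> \<bar>real_of_int k\<bar>" using False by linarith
    hence "2 * pi * 1 \<le> 2 * pi * \<bar>real_of_int k\<bar>" using pi_gt_zero by (intro mult_left_mono) auto
    thus ?thesis using assms(4) pi_gt_zero by (simp add: abs_mult)
  qed
  ultimately show ?thesis by (simp add: atLeast0LessThan)
qed

lemma equal_turn:
  fixes \<psi> :: "nat \<Rightarrow> real" and k :: int
  assumes "N \<ge> 3" "(\<Sum>i<N. cos (\<psi> i)) = 0" "(\<Sum>i<N. sin (\<psi> i)) = 0"
    "\<psi> N = \<psi> 0 + 2 * pi * of_int k"
    and eq: "\<forall>i<N. \<bar>\<psi> (Suc i) - \<psi> i\<bar> = 2 * pi / real N"
  shows "\<exists>s\<in>{1,-1::real}. \<forall>i<N. \<psi> (Suc i) - \<psi> i = s * (2 * pi / real N)"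
proof -
  let ?d = "2 * pi / real N"
  have N0: "N > 0" using assms(1) by simp
  have dpos: "0 < ?d" using N0 by simp
  have dlt: "?d < pi" using assms(1) pi_gt_zero by (simp add: field_simps)
  have S: "(\<Sum>i<N. \<bar>\<psi> (Suc i) - \<psi> i\<bar>) = 2 * pi" using eq N0 by simp
  show ?thesis
  proof (cases "k = 0")
    case True
    let ?M = "Max (\<psi> ` {..<N})" and ?m = "Min (\<psi> ` {..<N})"
    have "?M - ?m = pi" using span_turn[of N \<psi>] span_ge_pi[OF N0 assms(2,3)] assms(4) True N0 S by simp
    define c where "c = ?m + pi/2"
    have bnd: "\<psi> i - c \<le> pi/2 \<and> -(pi/2) \<le> \<psi> i - c" if "i < N" for i
    proof -
      have "\<psi> i \<le> ?M" "?m \<le> \<psi> i" using that by auto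
      thus ?thesis using \<open>?M - ?m = pi\<close> unfolding c_def by auto
    qed
    have nn: "\<forall>i\<in>{..<N}. 0 \<le> cos (\<psi> i - c)" using bnd by (auto intro!: cos_ge_zero)
    have "\<forall>i\<in>{..<N}. cos (\<psi> i - c) = 0"
      using halfplane[OF assms(2,3), of c] sum_nonneg_eq_0_iff[of "{..<N}" "\<lambda>i. cos (\<psi> i - c)"] nn by simp
    hence edge: "\<bar>\<psi> i - c\<bar> = pi/2" if "i < N" for i
      using bnd[OF that] cos_gt_zero_pi[of "\<psi> i - c"] that by force
    have "\<bar>\<psi> 1 - \<psi> 0\<bar> = ?d" using eq N0 by auto
    moreover have "\<bar>\<psi> 1 - \<psi> 0\<bar> = 0 \<or> \<bar>\<psi> 1 - \<psi> 0\<bar> = pi"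
      using edge[of 0] edge[of 1] assms(1) by (auto simp: abs_if split: if_splits)
    ultimately show ?thesis using dpos dlt by auto
  next
    case False
    have T: "(\<Sum>i<N. \<psi> (Suc i) - \<psi> i) = \<psi> N - \<psi> 0" by (rule sum_lessThan_telescope)
    have "2 * pi \<le> \<bar>\<psi> N - \<psi> 0\<bar>"
    proof -
      have "1 \<le> \<bar>real_of_int k\<bar>" using False by linarith
      hence "2 * pi * 1 \<le> 2 * pi * \<bar>real_of_int k\<bar>" using pi_gt_zero by (intro mult_left_mono) auto
      thus ?thesis using assms(4) pi_gt_zero by (simp add: abs_mult)
    qed
    hence A: "(\<Sum>i<N. \<bar>\<psi> (Suc i) - \<psi> i\<bar>) \<le> \<bar>\<Sum>i<N. \<psi> (Suc i) - \<psi> i\<bar>" using S T by simp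
    show ?thesis
    proof (cases "0 \<le> (\<Sum>i<N. \<psi> (Suc i) - \<psi> i)")
      case True
      have "(\<Sum>i<N. \<bar>\<psi> (Suc i) - \<psi> i\<bar> - (\<psi> (Suc i) - \<psi> i)) = 0"
        using A True sum_abs[of "\<lambda>i. \<psi> (Suc i) - \<psi> i" "{..<N}"] by (simp add: sum_subtractf)
      hence "\<forall>i\<in>{..<N}. \<bar>\<psi> (Suc i) - \<psi> i\<bar> - (\<psi> (Suc i) - \<psi> i) = 0"
        by (subst sum_nonneg_eq_0_iff[symmetric]) auto
      hence "\<forall>i<N. \<psi> (Suc i) - \<psi> i = 1 * ?d"
      proof (intro allI impI)
        fix i assume "i < N" "\<forall>i\<in>{..<N}. \<bar>\<psi> (Suc i) - \<psi> i\<bar> - (\<psi> (Suc i) - \<psi> i) = 0"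
        hence "\<bar>\<psi> (Suc i) - \<psi> i\<bar> - (\<psi> (Suc i) - \<psi> i) = 0" "\<bar>\<psi> (Suc i) - \<psi> i\<bar> = ?d" using eq by auto
        thus "\<psi> (Suc i) - \<psi> i = 1 * ?d" by linarith
      qed
      thus ?thesis by blast
    next
      case False
      have "(\<Sum>i<N. \<bar>\<psi> (Suc i) - \<psi> i\<bar> + (\<psi> (Suc i) - \<psi> i)) = 0"
        using A False sum_abs[of "\<lambda>i. \<psi> (Suc i) - \<psi> i" "{..<N}"] by (simp add: sum.distrib)
      hence "\<forall>i\<in>{..<N}. \<bar>\<psi> (Suc i) - \<psi> i\<bar> + (\<psi> (Suc i) - \<psi> i) = 0"
        by (subst sum_nonneg_eq_0_iff[symmetric]) auto
      hence "\<forall>i<N. \<psi> (Suc i) - \<psi> i = (-1) * ?d"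
      proof (intro allI impI)
        fix i assume "i < N" "\<forall>i\<in>{..<N}. \<bar>\<psi> (Suc i) - \<psi> i\<bar> + (\<psi> (Suc i) - \<psi> i) = 0"
        hence "\<bar>\<psi> (Suc i) - \<psi> i\<bar> + (\<psi> (Suc i) - \<psi> i) = 0" "\<bar>\<psi> (Suc i) - \<psi> i\<bar> = ?d" using eq by auto
        thus "\<psi> (Suc i) - \<psi> i = (-1) * ?d" by linarith
      qed
      thus ?thesis by blast
    qed
  qed
qed



lemma near_angle: "\<exists>p::real. cos p = cos t \<and> sin p = sin t \<and> \<bar>p - a\<bar> \<le> pi"
proof -
  define k where "k = round ((a - t) / (2*pi))"
  have "of_int k \<ge> (a - t) / (2*pi) - 1/2" "of_int k \<le> (a - t) / (2*pi) + 1/2"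
    unfolding k_def using of_int_round_ge of_int_round_le by auto
  hence "2*pi * of_int k \<ge> (a - t) - pi" "2*pi * of_int k \<le> (a - t) + pi"
    using pi_gt_zero by (auto simp: field_simps)
  moreover have "cos (t + 2*pi * of_int k) = cos t" "sin (t + 2*pi * of_int k) = sin t"
    using sin_cos_eq_iff by blast+
  ultimately show ?thesis by (intro exI[of _ "t + 2*pi * of_int k"]) auto
qed

primrec lift :: "(nat \<Rightarrow> real) \<Rightarrow> nat \<Rightarrow> real" where
  "lift f 0 = f 0"
| "lift f (Suc n) = (SOME p. cos p = cos (f (Suc n)) \<and> sin p = sin (f (Suc n)) \<and> \<bar>p - lift f n\<bar> \<le> pi)"

lemma lift_props:
  "cos (lift f n) = cos (f n)" "sin (lift f n) = sin (f n)" "\<bar>lift f (Suc n) - lift f n\<bar> \<le> pi"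
proof -
  have S: "cos (lift f (Suc m)) = cos (f (Suc m)) \<and> sin (lift f (Suc m)) = sin (f (Suc m)) \<and> \<bar>lift f (Suc m) - lift f m\<bar> \<le> pi" for m
    unfolding lift.simps(2) by (rule someI_ex[OF near_angle])
  show "cos (lift f n) = cos (f n)" "sin (lift f n) = sin (f n)"
    using S by (cases n; simp)+
  show "\<bar>lift f (Suc n) - lift f n\<bar> \<le> pi" using S by blast
qed

lemma chord:
  fixes l a b :: real
  assumes "0 \<le> l" "\<bar>b - a\<bar> \<le> pi"
  shows "sqrt ((l * cos a + l * cos b)^2 + (l * sin a + l * sin b)^2) = 2 * l * cos (\<bar>b - a\<bar> / 2)"
proof -
  define h where "h = (b - a) / 2"
  have "(l * cos a + l * cos b)^2 + (l * sin a + l * sin b)^2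
      = l^2 * (2 + 2 * (cos b * cos a + sin b * sin a))"
    using sin_cos_squared_add[of a] sin_cos_squared_add[of b] by algebra
  also have "\<dots> = l^2 * (2 + 2 * cos (b - a))" by (simp add: cos_diff)
  finally have E1: "(l * cos a + l * cos b)^2 + (l * sin a + l * sin b)^2 = l^2 * (2 + 2 * cos (b - a))" .
  have E2: "cos (b - a) = 2 * (cos h)^2 - 1"
  proof -
    have "b - a = 2 * h" unfolding h_def by simp
    hence "cos (b - a) = (cos h)^2 - (sin h)^2" using cos_double[of h] by simp
    thus ?thesis using sin_squared_eq[of h] by simp
  qed
  have E: "(l * cos a + l * cos b)^2 + (l * sin a + l * sin b)^2 = (2 * l * cos h)^2"
    unfolding E1 E2 by (simp add: power2_eq_square algebra_simps)
  have hh: "\<bar>b - a\<bar> / 2 = \<bar>h\<bar>" unfolding h_def by simp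
  have "cos h = cos (\<bar>b - a\<bar> / 2)" unfolding hh
    by (cases "0 \<le> h") (simp_all add: abs_if)
  moreover have "0 \<le> cos (\<bar>b - a\<bar> / 2)" using assms(2) by (intro cos_ge_zero) auto
  ultimately have "\<bar>2 * l * cos h\<bar> = 2 * l * cos (\<bar>b - a\<bar> / 2)" using assms(1) by simp
  thus ?thesis unfolding E real_sqrt_abs .
qed

lemma sum_mod_shift:
  fixes g :: "nat \<Rightarrow> 'a::comm_monoid_add"
  assumes "N > 0"
  shows "(\<Sum>i<N. g (Suc i mod N)) = (\<Sum>i<N. g i)"
proof -
  obtain M where M: "N = Suc M" using assms by (cases N) auto
  have "(\<Sum>i<Suc M. g (Suc i mod Suc M)) = (\<Sum>i<M. g (Suc i mod Suc M)) + g (Suc M mod Suc M)"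
    by simp
  also have "(\<Sum>i<M. g (Suc i mod Suc M)) = (\<Sum>i<M. g (Suc i))" by (intro sum.cong) auto
  also have "(\<Sum>i<M. g (Suc i)) + g (Suc M mod Suc M) = (\<Sum>i<Suc M. g i)"
    unfolding sum.lessThan_Suc_shift by (simp add: add.commute)
  finally show ?thesis using M by simp
qed

lemma reg_step:
  fixes s t l :: real and N i :: nat
  assumes "s \<in> {1, -1}" "sin (pi / real N) \<noteq> 0"
  defines "R \<equiv> l / (2 * sin (pi / real N))"
  defines "m \<equiv> t + s * 2 * pi * real i / real N + s * pi / real N"
  shows "R * (cos (t + s * 2 * pi * real (Suc i) / real N) - cos (t + s * 2 * pi * real i / real N))
           = l * cos (m + s * pi / 2)"
    and "R * (sin (t + s * 2 * pi * real (Suc i) / real N) - sin (t + s * 2 * pi * real i / real N))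
           = l * sin (m + s * pi / 2)"
proof -
  define h where "h = s * pi / real N"
  have N: "real N \<noteq> 0" using assms(2) by (cases "N = 0") auto
  have a1: "t + s * 2 * pi * real (Suc i) / real N = m + h" unfolding m_def h_def using N
    by (simp add: field_simps)
  have a2: "t + s * 2 * pi * real i / real N = m - h" unfolding m_def h_def using N
    by (simp add: field_simps)
  have c: "cos (m + h) - cos (m - h) = - 2 * sin m * sin h" by (simp add: cos_add cos_diff)
  have d: "sin (m + h) - sin (m - h) = 2 * cos m * sin h" by (simp add: sin_add sin_diff)
  have sh: "sin h = s * sin (pi / real N)" using assms(1) unfolding h_def by auto
  have cs: "cos (m + s * pi / 2) = - s * sin m" "sin (m + s * pi / 2) = s * cos m"
    using assms(1) by (auto simp: cos_add sin_add)
  show "R * (cos (t + s * 2 * pi * real (Suc i) / real N) - cos (t + s * 2 * pi * real i / real N))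
           = l * cos (m + s * pi / 2)"
    unfolding a1 a2 c sh cs R_def using assms(2) by (simp add: field_simps)
  show "R * (sin (t + s * 2 * pi * real (Suc i) / real N) - sin (t + s * 2 * pi * real i / real N))
           = l * sin (m + s * pi / 2)"
    unfolding a1 a2 d sh cs R_def using assms(2) by (simp add: field_simps)
qed



theorem proposition5p1:
  fixes N :: nat and l :: real and y :: "nat \<Rightarrow> real^2"
  assumes "N \<ge> 4" and "l > 0" and "equilateral_polygon N l y"
  shows "diag2_sum N y \<le> 2 * real N * l * cos (pi / real N) \<and>
         (diag2_sum N y = 2 * real N * l * cos (pi / real N) \<longrightarrow> regular_polygon N l y)"
proof -
  have N4: "N \<ge> 4" and l0: "l > 0" using assms by auto
  have N0: "N > 0" using N4 by simp
  define e where "e i = y (Suc i mod N) - y i" for i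
  have ne: "norm (e i) = l" if "i < N" for i
    using assms(3) that unfolding equilateral_polygon_def e_def by (simp add: dist_norm norm_minus_commute)
  have "\<forall>i. \<exists>t. i < N \<longrightarrow> (e i)$1 = l * cos t \<and> (e i)$2 = l * sin t"
  proof (intro allI)
    fix i
    show "\<exists>t. i < N \<longrightarrow> (e i)$1 = l * cos t \<and> (e i)$2 = l * sin t"
    proof (cases "i < N")
      case True
      have "sqrt (((e i)$1)^2 + ((e i)$2)^2) = l" using ne[OF True] norm2 by simp
      hence "((e i)$1)^2 + ((e i)$2)^2 = l^2" using l0 by (metis real_sqrt_ge_0_iff real_sqrt_pow2 zero_le_power2 add_nonneg_nonneg)
      hence "((e i)$1 / l)^2 + ((e i)$2 / l)^2 = 1" using l0 by (simp add: field_simps power2_eq_square)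
      then obtain t where "(e i)$1 / l = cos t" "(e i)$2 / l = sin t" by (metis sincos_total_2pi)
      hence "(e i)$1 = l * cos t \<and> (e i)$2 = l * sin t" using l0 by (simp add: field_simps)
      thus ?thesis by blast
    qed auto
  qed
  then obtain \<theta> where \<theta>: "\<And>i. i < N \<Longrightarrow> (e i)$1 = l * cos (\<theta> i) \<and> (e i)$2 = l * sin (\<theta> i)" by metis
  define \<psi> where "\<psi> = lift (\<lambda>j. \<theta> (j mod N))"
  have e\<psi>: "(e (j mod N))$1 = l * cos (\<psi> j) \<and> (e (j mod N))$2 = l * sin (\<psi> j)" for j
    using \<theta>[of "j mod N"] lift_props(1,2)[of "\<lambda>j. \<theta> (j mod N)" j] N0 by (simp add: \<psi>_def)
  have step: "\<bar>\<psi> (Suc j) - \<psi> j\<bar> \<le> pi" for j unfolding \<psi>_def by (rule lift_props(3))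
  have esum: "(\<Sum>i<N. e i) = 0"
    unfolding e_def sum_subtractf using sum_mod_shift[OF N0, of y] by simp
  have csum: "(\<Sum>i<N. cos (\<psi> i)) = 0"
  proof -
    have "(\<Sum>i<N. l * cos (\<psi> i)) = (\<Sum>i<N. (e i)$1)"
      by (intro sum.cong refl) (metis e\<psi> lessThan_iff mod_less)
    also have "\<dots> = 0" using esum by (simp flip: sum_component)
    finally show ?thesis using l0 by (simp flip: sum_distrib_left)
  qed
  have ssum: "(\<Sum>i<N. sin (\<psi> i)) = 0"
  proof -
    have "(\<Sum>i<N. l * sin (\<psi> i)) = (\<Sum>i<N. (e i)$2)"
      by (intro sum.cong refl) (metis e\<psi> lessThan_iff mod_less)
    also have "\<dots> = 0" using esum by (simp flip: sum_component)
    finally show ?thesis using l0 by (simp flip: sum_distrib_left)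
  qed
  obtain k :: int where k: "\<psi> N = \<psi> 0 + 2 * pi * of_int k"
  proof -
    have "l * cos (\<psi> N) = l * cos (\<psi> 0)" "l * sin (\<psi> N) = l * sin (\<psi> 0)"
      using e\<psi>[of N] e\<psi>[of 0] by auto
    hence "sin (\<psi> N) = sin (\<psi> 0) \<and> cos (\<psi> N) = cos (\<psi> 0)" using l0 by auto
    thus ?thesis using that sin_cos_eq_iff by blast
  qed
  define \<Delta> where "\<Delta> i = \<psi> (Suc i) - \<psi> i" for i
  have Dsum: "diag2_sum N y = (\<Sum>i<N. 2 * l * cos (\<bar>\<Delta> i\<bar> / 2))"
    unfolding diag2_sum_def
  proof (intro sum.cong refl)
    fix i assume i: "i \<in> {..<N}"
    have "y ((i + 2) mod N) - y i = e i + e (Suc i mod N)"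
      unfolding e_def by (simp add: mod_Suc_eq)
    hence "dist (y i) (y ((i + 2) mod N)) = norm (e i + e (Suc i mod N))"
      by (metis dist_commute dist_norm)
    also have "\<dots> = sqrt ((l * cos (\<psi> i) + l * cos (\<psi> (Suc i)))^2 + (l * sin (\<psi> i) + l * sin (\<psi> (Suc i)))^2)"
      using e\<psi>[of i] e\<psi>[of "Suc i"] i unfolding norm2 by simp
    also have "\<dots> = 2 * l * cos (\<bar>\<Delta> i\<bar> / 2)" unfolding \<Delta>_def
      using l0 step[of i] by (intro chord) auto
    finally show "dist (y i) (y ((i + 2) mod N)) = 2 * l * cos (\<bar>\<Delta> i\<bar> / 2)" .
  qed
  define c where "c = pi / real N"
  have c0: "0 < c" and c1: "c \<le> pi / 2" unfolding c_def using N4 pi_gt_zero by (auto simp: field_simps)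
  have Nc: "real N * c = pi" unfolding c_def using N0 by simp
  have sc: "0 \<le> sin c" using c0 c1 by (intro sin_ge_zero) auto
  define u where "u i = \<bar>\<Delta> i\<bar> / 2" for i
  have ub: "0 \<le> u i" "u i \<le> pi / 2" for i unfolding u_def \<Delta>_def using step[of i] by auto
  have T: "2 * pi \<le> (\<Sum>i<N. \<bar>\<Delta> i\<bar>)" unfolding \<Delta>_def by (rule total_turn[OF N0 csum ssum k])
  have usum: "pi \<le> (\<Sum>i<N. u i)" using T unfolding u_def by (simp flip: sum_divide_distrib)
  have tan: "cos (u i) \<le> cos c - sin c * (u i - c)" for i using tangent_cos(1)[OF ub(1,2) less_imp_le[OF c0] c1] .
  have R: "(\<Sum>i<N. cos c - sin c * (u i - c)) \<le> real N * cos c"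
  proof -
    have "(\<Sum>i<N. cos c - sin c * (u i - c)) = real N * cos c - sin c * ((\<Sum>i<N. u i) - real N * c)"
      by (simp add: sum_subtractf sum_distrib_left right_diff_distrib)
    also have "\<dots> \<le> real N * cos c" using sc usum Nc by (simp add: mult_nonneg_nonneg)
    finally show ?thesis .
  qed
  have L: "(\<Sum>i<N. cos (u i)) \<le> real N * cos c"
    using sum_mono[of "{..<N}" "\<lambda>i. cos (u i)" "\<lambda>i. cos c - sin c * (u i - c)"] tan R by force
  have DS: "diag2_sum N y = 2 * l * (\<Sum>i<N. cos (u i))" unfolding Dsum u_def by (simp add: sum_distrib_left)
  have part1: "diag2_sum N y \<le> 2 * real N * l * cos (pi / real N)"
    unfolding DS using L l0 unfolding c_def by (simp add: mult.assoc mult.left_commute)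
  moreover have "regular_polygon N l y" if eq: "diag2_sum N y = 2 * real N * l * cos (pi / real N)"
  proof -
    have eqs: "(\<Sum>i<N. cos (u i)) = real N * cos c" using eq l0 unfolding DS c_def
      by (simp add: mult.assoc mult.left_commute)
    have uc: "u i = c" if "i < N" for i
    proof (rule ccontr)
      assume "u i \<noteq> c"
      hence "cos (u i) < cos c - sin c * (u i - c)"
        using tangent_cos(2)[OF ub(1,2) less_imp_le[OF c0] c1] by blast
      hence "(\<Sum>i<N. cos (u i)) < (\<Sum>i<N. cos c - sin c * (u i - c))"
        using that tan by (intro sum_strict_mono_ex1) auto
      with R eqs show False by simp
    qed
    have absD: "\<forall>i<N. \<bar>\<psi> (Suc i) - \<psi> i\<bar> = 2 * pi / real N"
      using uc unfolding u_def \<Delta>_def c_def by auto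
    have "\<exists>s\<in>{1, -1::real}. \<forall>i<N. \<psi> (Suc i) - \<psi> i = s * (2 * pi / real N)"
      by (rule equal_turn[OF _ csum ssum k absD]) (use N4 in linarith)
    then obtain s where s: "s \<in> {1, -1::real}" and sD: "\<forall>i<N. \<psi> (Suc i) - \<psi> i = s * (2 * pi / real N)"
      by blast
    have \<psi>i: "\<psi> i = \<psi> 0 + s * (2 * pi / real N) * real i" if "i \<le> N" for i
      using that
    proof (induction i)
      case (Suc i)
      thus ?case using sD by (simp add: algebra_simps add_divide_distrib)
    qed simp
    have "0 < sin c" using c0 c1 pi_gt_zero by (intro sin_gt_zero) auto
    hence sinc: "sin (pi / real N) \<noteq> 0" unfolding c_def by simp
    define Rr where "Rr = l / (2 * sin (pi / real N))"
    define t where "t = \<psi> 0 - s * pi / real N - s * pi / 2"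
    define cc where "cc = y 0 - Rr *\<^sub>R vector [cos t, sin t]"
    have main: "y i = cc + Rr *\<^sub>R vector [cos (t + s * 2 * pi * real i / real N), sin (t + s * 2 * pi * real i / real N)]"
      if "i < N" for i
      using that
    proof (induction i)
      case 0
      show ?case unfolding cc_def by simp
    next
      case (Suc i)
      hence IH: "y i = cc + Rr *\<^sub>R vector [cos (t + s * 2 * pi * real i / real N), sin (t + s * 2 * pi * real i / real N)]"
        by simp
      have ys: "y (Suc i) = y i + e i" unfolding e_def using Suc.prems by simp
      define m where "m = t + s * 2 * pi * real i / real N + s * pi / real N"
      have pm: "\<psi> i = m + s * pi / 2"
        unfolding m_def t_def using \<psi>i[of i] Suc.prems N0 by (simp add: field_simps)
      have e1: "(e i)$1 = l * cos (m + s * pi / 2)" "(e i)$2 = l * sin (m + s * pi / 2)"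
        using e\<psi>[of i] Suc.prems pm by auto
      note rs = reg_step[OF s sinc, of l t i, folded Rr_def, folded m_def]
      show ?case unfolding ys IH
      proof (subst vec_eq_iff, intro allI)
        fix j :: 2
        show "(cc + Rr *\<^sub>R vector [cos (t + s * 2 * pi * real i / real N), sin (t + s * 2 * pi * real i / real N)] + e i) $ j =
          (cc + Rr *\<^sub>R vector [cos (t + s * 2 * pi * real (Suc i) / real N), sin (t + s * 2 * pi * real (Suc i) / real N)]) $ j"
          using exhaust_2[of j] rs e1 by (auto simp: algebra_simps)
      qed
    qed
    show ?thesis unfolding regular_polygon_def Rr_def[symmetric]
      using s main by blast
  qed
  ultimately show ?thesis by blast
qed

end
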